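(* Let $Q_S=(X_0,Y_0,G,\mathcal{S})$ be a surrogate outcome query with graph $G=(V,E)$ and let $Q_T$ be its query transformation with collection of transportability diagrams $\mathcal{D}$; let $T$ be the set of all transportability nodes. If $X,Y\subseteq V$ are sets containing no transportability nodes and $(Y\perp X\mid Z)_{D_i}$ holds in some $D_i\in\mathcal{D}$, then $(Y\perp X\mid Z\setminus T)_G$ holds. Conversely, every conditional independence (d-separation) statement that holds in $G$ holds in every diagram of $\mathcal{D}$.
   Context: A (semi-Markovian) graph $G=(V,E)$ has acyclic directed edges and bidirected edges. d-separation $(Y\perp X\mid Z)$: every path between $X$ and $Y$ contains a non-collider in $Z$ or a collider $M$ (both adjacent path edges have arrowheads into $M$) with $\mathrm{De}(M)\cap Z=\emptyset$, where $\mathrm{De}(M)$ includes $M$. $\mathrm{An},\mathrm{De}$ include the set itself; $G[\overline{Z}]$ removes edges into $Z$; c-components are maximal sets connected by bidirected paths. Surrogate outcome query: $(X_0,Y_0,G,\mathcal{S})$ with $X_0,Y_0\subset V$ disjoint and $\mathcal{S}=\{(Z_i,W_i)\}_{i=1}^n$ satisfying $W_i\subset\mathrm{De}(Z_i)_G\setminus Z_i$, $Z_i\subset\mathrm{An}(W_i)_G\setminus W_i$, $\mathrm{De}(W_i)_G\cap Z_i=\emptyset$, $\mathrm{An}(W_{ij})_G\setminus W_i=\mathrm{An}(W_i)_G\setminus W_i$ for each $W_{ij}\in W_i$. Its query transformation has diagrams $D^{(1)},\dots,D^{(n)}$, where $D^{(i)}$ is $G$ plus a new node $T^{(i)}_j$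 with a single edge $T^{(i)}_j\to V_j$ for each $V_j\in(\mathrm{De}(Z_i)_G\setminus W_i)\cup(C_{W_i}\setminus\mathrm{An}(W_i)_{G[\overline{Z_i}]})$, $C_{W_i}$ being the union of vertex sets of c-components of $G$ meeting $W_i$. *)

theory Defs
  imports Main
begin

text \<open>A graph has a vertex set, directed edges (u,w) meaning u -> w, and
bidirected edges (u,w) meaning u <-> w (stored symmetrically).\<close>

record 'v graph =
  verts  :: "'v set"
  dedges :: "('v \<times> 'v) set"
  bedges :: "('v \<times> 'v) set"

definition wf_graph :: "'v graph \<Rightarrow> bool" where
  "wf_graph G \<longleftrightarrow> finite (verts G)
     \<and> dedges G \<subseteq> verts G \<times> verts G
     \<and> bedges G \<subseteq> verts G \<times> verts G
     \<and> sym (bedges G) \<and> (\<forall>v. (v, v) \<notin> bedges G)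
     \<and> acyclic (dedges G)"

definition De :: "'v graph \<Rightarrow> 'v set \<Rightarrow> 'v set" where
  "De G A = {w \<in> verts G. \<exists>a\<in>A. (a, w) \<in> (dedges G)\<^sup>*}"

definition An :: "'v graph \<Rightarrow> 'v set \<Rightarrow> 'v set" where
  "An G A = {w \<in> verts G. \<exists>a\<in>A. (w, a) \<in> (dedges G)\<^sup>*}"

text \<open>G[overline Z]: remove all edges with an arrowhead into Z.\<close>

definition remove_into :: "'v graph \<Rightarrow> 'v set \<Rightarrow> 'v graph" where
  "remove_into G Z = G\<lparr> dedges := {(u, w) \<in> dedges G. w \<notin> Z},
                        bedges := {(u, w) \<in> bedges G. u \<notin> Z \<and> w \<notin> Z} \<rparr>"

definition ccomp :: "'v graph \<Rightarrow> 'v \<Rightarrow> 'v set" where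
  "ccomp G v = {u \<in> verts G. (v, u) \<in> (bedges G)\<^sup>*}"

definition c_components :: "'v graph \<Rightarrow> 'v set set" where
  "c_components G = ccomp G ` verts G"

definition C_set :: "'v graph \<Rightarrow> 'v set \<Rightarrow> 'v set" where
  "C_set G W = \<Union>{C \<in> c_components G. C \<inter> W \<noteq> {}}"

text \<open>A path is a start vertex and a list of steps (edge kind, next vertex).
Fwd: u -> w, Bwd: u <- w, Bid: u <-> w (u current, w next vertex).\<close>

datatype ekind = Fwd | Bwd | Bid

definition path_nodes :: "'v \<Rightarrow> (ekind \<times> 'v) list \<Rightarrow> 'v list" where
  "path_nodes s ps = s # map snd ps"

definition edge_ok :: "'v graph \<Rightarrow> 'v \<Rightarrow> ekind \<times> 'v \<Rightarrow> bool" where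
  "edge_ok G u e = (case e of
      (Fwd, w) \<Rightarrow> (u, w) \<in> dedges G
    | (Bwd, w) \<Rightarrow> (w, u) \<in> dedges G
    | (Bid, w) \<Rightarrow> (u, w) \<in> bedges G)"

definition is_path :: "'v graph \<Rightarrow> 'v \<Rightarrow> (ekind \<times> 'v) list \<Rightarrow> bool" where
  "is_path G s ps \<longleftrightarrow> s \<in> verts G \<and> distinct (path_nodes s ps)
     \<and> (\<forall>k < length ps. edge_ok G (path_nodes s ps ! k) (ps ! k))"

text \<open>The intermediate node with index k (0 < k < length ps) is a collider iff both
adjacent path edges have arrowheads into it.\<close>

definition collider_at :: "(ekind \<times> 'v) list \<Rightarrow> nat \<Rightarrow> bool" where
  "collider_at ps k \<longleftrightarrow> fst (ps ! (k - 1)) \<in> {Fwd, Bid} \<and> fst (ps ! k) \<in> {Bwd, Bid}"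

definition blocked :: "'v graph \<Rightarrow> 'v set \<Rightarrow> 'v \<Rightarrow> (ekind \<times> 'v) list \<Rightarrow> bool" where
  "blocked G Z s ps \<longleftrightarrow> (\<exists>k. 0 < k \<and> k < length ps \<and>
      ((\<not> collider_at ps k \<and> path_nodes s ps ! k \<in> Z) \<or>
       (collider_at ps k \<and> De G {path_nodes s ps ! k} \<inter> Z = {})))"

text \<open>dsep G X Y Z is (Y \<perp> X | Z)_G.\<close>

definition dsep :: "'v graph \<Rightarrow> 'v set \<Rightarrow> 'v set \<Rightarrow> 'v set \<Rightarrow> bool" where
  "dsep G X Y Z \<longleftrightarrow> (\<forall>s ps. is_path G s ps \<and> s \<in> X \<and> last (path_nodes s ps) \<in> Y
        \<longrightarrow> blocked G Z s ps)"

text \<open>S is the list [(Z_1,W_1),...,(Z_n,W_n)] (0-based indexing).\<close>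

definition surrogate_query ::
  "'v set \<Rightarrow> 'v set \<Rightarrow> 'v graph \<Rightarrow> ('v set \<times> 'v set) list \<Rightarrow> bool" where
  "surrogate_query X0 Y0 G S \<longleftrightarrow> wf_graph G
     \<and> X0 \<subseteq> verts G \<and> Y0 \<subseteq> verts G \<and> X0 \<inter> Y0 = {}
     \<and> (\<forall>(Zi, Wi) \<in> set S.
          Zi \<subseteq> verts G \<and> Wi \<subseteq> verts G
        \<and> Wi \<subseteq> De G Zi - Zi
        \<and> Zi \<subseteq> An G Wi - Wi
        \<and> De G Wi \<inter> Zi = {}
        \<and> (\<forall>w \<in> Wi. An G {w} - Wi = An G Wi - Wi))"

text \<open>Vertices V_j receiving a transportability node T^(i)_j in D^(i).\<close>

definition t_targets :: "'v graph \<Rightarrow> 'v set \<Rightarrow> 'v set \<Rightarrow> 'v set" where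
  "t_targets G Zi Wi = (De G Zi - Wi) \<union> (C_set G Wi - An (remove_into G Zi) Wi)"

text \<open>Diagram D^(i): original vertices are Inl v, the node T^(i)_j is Inr (i, V_j).\<close>

definition diagram ::
  "'v graph \<Rightarrow> ('v set \<times> 'v set) list \<Rightarrow> nat \<Rightarrow> ('v + nat \<times> 'v) graph" where
  "diagram G S i = (let tt = t_targets G (fst (S ! i)) (snd (S ! i)) in
     \<lparr> verts = Inl ` verts G \<union> Inr ` ({i} \<times> tt),
       dedges = map_prod Inl Inl ` dedges G \<union> {(Inr (i, v), Inl v) | v. v \<in> tt},
       bedges = map_prod Inl Inl ` bedges G \<rparr>)"

definition transport_nodes ::
  "'v graph \<Rightarrow> ('v set \<times> 'v set) list \<Rightarrow> ('v + nat \<times> 'v) set" where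
  "transport_nodes G S = (\<Union>i < length S. verts (diagram G S i) - Inl ` verts G)"

end

theory Submission
  imports Defs
begin

definition mp :: "(ekind \<times> 'v) list \<Rightarrow> (ekind \<times> ('v + 'w)) list" where
  "mp ps = map (\<lambda>(k, w). (k, Inl w)) ps"

lemma len_mp[simp]: "length (mp ps) = length ps"
  by (simp add: mp_def)

lemma nodes_mp: "path_nodes (Inl s) (mp ps) = map Inl (path_nodes s ps)"
  by (induction ps) (auto simp: mp_def path_nodes_def)

lemma nth_mp: "k < length ps \<Longrightarrow> mp ps ! k = (fst (ps ! k), Inl (snd (ps ! k)))"
  by (simp add: mp_def split: prod.splits)

lemma collider_mp: "k < length ps \<Longrightarrow> collider_at (mp ps) k = collider_at ps k"
  by (simp add: collider_at_def nth_mp)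

lemma verts_diag: "Inl v \<in> verts (diagram G S i) \<longleftrightarrow> v \<in> verts G"
  by (auto simp: diagram_def Let_def)

lemma dedges_diag_Inl: "(Inl a, Inl b) \<in> dedges (diagram G S i) \<longleftrightarrow> (a, b) \<in> dedges G"
  by (auto simp: diagram_def Let_def)

lemma dedges_diag_Inr2: "(x, Inr t) \<notin> dedges (diagram G S i)"
  by (auto simp: diagram_def Let_def)

lemma dedges_diag_Inr1: "(Inr t, w) \<in> dedges (diagram G S i) \<Longrightarrow> w = Inl (snd t)"
  by (auto simp: diagram_def Let_def)

lemma dedges_diag_Inl_Inr: "(Inl a, w) \<in> dedges (diagram G S i) \<Longrightarrow> \<exists>b. w = Inl b \<and> (a, b) \<in> dedges G"
  by (auto simp: diagram_def Let_def)

lemma bedges_diag_Inl: "(Inl a, Inl b) \<in> bedges (diagram G S i) \<longleftrightarrow> (a, b) \<in> bedges G"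
  by (auto simp: diagram_def Let_def)

lemma bedges_diag_Inr: "(Inr t, w) \<notin> bedges (diagram G S i)" "(w, Inr t) \<notin> bedges (diagram G S i)"
  by (auto simp: diagram_def Let_def)

lemma edge_ok_Inl: "edge_ok (diagram G S i) (Inl u) (e, Inl w) = edge_ok G u (e, w)"
  by (cases e) (auto simp: edge_ok_def dedges_diag_Inl bedges_diag_Inl)

lemma edge_ok_to_Inr: "edge_ok (diagram G S i) u (e, Inr t) \<Longrightarrow> u = Inl (snd t)"
  by (cases e) (auto simp: edge_ok_def dedges_diag_Inr2 bedges_diag_Inr dest: dedges_diag_Inr1)

lemma edge_ok_from_Inr: "edge_ok (diagram G S i) (Inr t) (e, w) \<Longrightarrow> w = Inl (snd t)"
  by (cases e) (auto simp: edge_ok_def dedges_diag_Inr2 bedges_diag_Inr dest: dedges_diag_Inr1)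

lemma De_diag: "De (diagram G S i) {Inl v} = Inl ` De G {v}"
proof -
  have 1: "(Inl v, w) \<in> (dedges (diagram G S i))\<^sup>* \<Longrightarrow> \<exists>u. w = Inl u \<and> (v, u) \<in> (dedges G)\<^sup>*" for w
  proof (induction rule: rtrancl_induct)
    case base then show ?case by auto
  next
    case (step y z)
    then obtain u where u: "y = Inl u" "(v, u) \<in> (dedges G)\<^sup>*" by auto
    with step(2) obtain b where "z = Inl b" "(u, b) \<in> dedges G"
      using dedges_diag_Inl_Inr by metis
    with u show ?case by (blast intro: rtrancl_into_rtrancl)
  qed
  have 2: "(v, u) \<in> (dedges G)\<^sup>* \<Longrightarrow> (Inl v, Inl u) \<in> (dedges (diagram G S i))\<^sup>*" for u
  proof (induction rule: rtrancl_induct)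
    case base then show ?case by auto
  next
    case (step y z)
    then show ?case using dedges_diag_Inl
      by (metis rtrancl.rtrancl_into_rtrancl)
  qed
  show ?thesis
    unfolding De_def
    apply (rule set_eqI)
    apply (rule iffI)
    using 1 verts_diag apply fastforce
    using 2 verts_diag apply fastforce
    done
qed

lemma blocked_mp:
  assumes "is_path G s ps"
  shows "blocked (diagram G S i) Z (Inl s) (mp ps) \<longleftrightarrow> blocked G (Inl -` Z) s ps"
proof -
  have n: "k < length ps \<Longrightarrow> path_nodes (Inl s) (mp ps) ! k = Inl (path_nodes s ps ! k)" for k
    by (subst nodes_mp, rule nth_map, simp add: path_nodes_def)
  have d: "De (diagram G S i) {Inl v} \<inter> Z = {} \<longleftrightarrow> De G {v} \<inter> Inl -` Z = {}" for v
    by (auto simp: De_diag)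
  have e: "k < length ps \<Longrightarrow>
     ((\<not> collider_at (mp ps) k \<and> path_nodes (Inl s) (mp ps) ! k \<in> Z) \<or>
       (collider_at (mp ps) k \<and> De (diagram G S i) {path_nodes (Inl s) (mp ps) ! k} \<inter> Z = {}))
     \<longleftrightarrow> ((\<not> collider_at ps k \<and> path_nodes s ps ! k \<in> Inl -` Z) \<or>
       (collider_at ps k \<and> De G {path_nodes s ps ! k} \<inter> Inl -` Z = {}))" for k
    by (simp only: n d collider_mp) simp
  show ?thesis unfolding blocked_def len_mp
    apply (rule ex_cong1)
    subgoal for k using e[of k] by (cases "k < length ps") auto
    done
qed

lemma last_mp: "last (path_nodes (Inl s) (mp ps)) = Inl (last (path_nodes s ps))"
  unfolding nodes_mp by (rule last_map) (simp add: path_nodes_def)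

lemma all_Inl:
  assumes p: "is_path (diagram G S i) s' ps'" and s: "isl s'" and l: "isl (last (path_nodes s' ps'))"
    and j: "j \<le> length ps'"
  shows "isl (path_nodes s' ps' ! j)"
proof (rule ccontr)
  let ?n = "path_nodes s' ps'"
  assume a: "\<not> isl (?n ! j)"
  then obtain t where t: "?n ! j = Inr t" by (cases "?n ! j") auto
  have ln: "length ?n = Suc (length ps')" by (simp add: path_nodes_def)
  have j0: "j \<noteq> 0" using s t by (cases j) (auto simp: path_nodes_def)
  have "last ?n = ?n ! length ps'" by (simp add: last_conv_nth ln path_nodes_def)
  then have jl: "j \<noteq> length ps'" using l t by auto
  have jl2: "j < length ps'" using j jl by simp
  have e1: "edge_ok (diagram G S i) (?n ! (j - 1)) (ps' ! (j - 1))"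
    using p j0 jl2 unfolding is_path_def by simp
  have sn1: "snd (ps' ! (j - 1)) = ?n ! j" using j0 jl2 by (simp add: path_nodes_def)
  have x1: "?n ! (j - 1) = Inl (snd t)"
  proof (cases "ps' ! (j - 1)")
    case (Pair e w)
    then have "edge_ok (diagram G S i) (?n ! (j - 1)) (e, Inr t)" using e1 sn1 t by simp
    then show ?thesis by (rule edge_ok_to_Inr)
  qed
  have e2: "edge_ok (diagram G S i) (?n ! j) (ps' ! j)"
    using p jl2 unfolding is_path_def by simp
  have sn2: "snd (ps' ! j) = ?n ! Suc j" using jl2 by (simp add: path_nodes_def)
  have x2: "?n ! Suc j = Inl (snd t)"
  proof (cases "ps' ! j")
    case (Pair e w)
    then have "edge_ok (diagram G S i) (Inr t) (e, w)" using e2 t by simp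
    then have "w = Inl (snd t)" by (rule edge_ok_from_Inr)
    then show ?thesis using sn2 Pair by simp
  qed
  have "distinct ?n" using p unfolding is_path_def by simp
  moreover have "j - 1 < length ?n" "Suc j < length ?n" using ln jl2 by auto
  moreover have "?n ! (j - 1) = ?n ! Suc j" using x1 x2 by simp
  ultimately have "j - 1 = Suc j" using nth_eq_iff_index_eq by blast
  then show False by simp
qed

lemma path_mp_iff: "is_path (diagram G S i) (Inl s) (mp ps) \<longleftrightarrow> is_path G s ps"
proof -
  have n: "k < length ps \<Longrightarrow> path_nodes (Inl s) (mp ps) ! k = Inl (path_nodes s ps ! k)" for k
    by (subst nodes_mp, rule nth_map, simp add: path_nodes_def)
  have e: "k < length ps \<Longrightarrow> edge_ok (diagram G S i) (path_nodes (Inl s) (mp ps) ! k) (mp ps ! k)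
        \<longleftrightarrow> edge_ok G (path_nodes s ps ! k) (ps ! k)" for k
    by (simp add: n nth_mp edge_ok_Inl)
  show ?thesis unfolding is_path_def len_mp
    using e by (auto simp: nodes_mp verts_diag distinct_map)
qed

lemma Inl_not_T: "Inl x \<notin> transport_nodes G S"
  by (auto simp: transport_nodes_def diagram_def Let_def)

lemma part1:
  assumes "dsep (diagram G S i) (Inl ` X) (Inl ` Y) Z"
  shows "dsep G X Y (Inl -` (Z - transport_nodes G S))"
proof -
  have eq: "Inl -` (Z - transport_nodes G S) = Inl -` Z" by (auto simp: Inl_not_T)
  show ?thesis unfolding eq dsep_def
  proof (intro allI impI)
    fix s ps assume a: "is_path G s ps \<and> s \<in> X \<and> last (path_nodes s ps) \<in> Y"
    have "blocked (diagram G S i) Z (Inl s) (mp ps)"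
      using assms[unfolded dsep_def, rule_format, of "Inl s" "mp ps"] a
      by (simp add: path_mp_iff last_mp)
    then show "blocked G (Inl -` Z) s ps" using blocked_mp[of G s ps S i Z] a by simp
  qed
qed

lemma part2:
  assumes "dsep G X Y Z"
  shows "dsep (diagram G S i) (Inl ` X) (Inl ` Y) (Inl ` Z)"
  unfolding dsep_def
proof (intro allI impI)
  fix s' ps' assume a: "is_path (diagram G S i) s' ps' \<and> s' \<in> Inl ` X \<and> last (path_nodes s' ps') \<in> Inl ` Y"
  then obtain s where s: "s' = Inl s" "s \<in> X" by auto
  have il: "isl (last (path_nodes s' ps'))" using a by auto
  define ps where "ps = map (\<lambda>(k, w). (k, projl w)) ps'"
  have "mp ps = ps'"
  proof (rule nth_equalityI)
    show "length (mp ps) = length ps'" by (simp add: ps_def)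
    fix k assume k: "k < length (mp ps)"
    then have k': "k < length ps'" by (simp add: ps_def)
    have "isl (path_nodes s' ps' ! Suc k)"
      using all_Inl[of G S i s' ps' "Suc k"] a s il k' by simp
    then have "isl (snd (ps' ! k))" using k' by (simp add: path_nodes_def)
    obtain e w where ew: "ps' ! k = (e, w)" by (cases "ps' ! k")
    with \<open>isl (snd (ps' ! k))\<close> obtain v where "w = Inl v" by (cases w) auto
    then show "mp ps ! k = ps' ! k" using k' ew
      by (simp add: nth_mp ps_def)
  qed
  then have p: "is_path G s ps" using a s path_mp_iff[of G S i s ps] by simp
  have "last (path_nodes s' ps') = Inl (last (path_nodes s ps))" unfolding s(1) \<open>mp ps = ps'\<close>[symmetric] by (rule last_mp)
  then have "last (path_nodes s ps) \<in> Y" using a by auto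
  then have "blocked G Z s ps" using assms p s unfolding dsep_def by simp
  then have "blocked (diagram G S i) (Inl ` Z) (Inl s) (mp ps)"
    using blocked_mp[of G s ps S i "Inl ` Z"] p by (simp add: inj_vimage_image_eq)
  then show "blocked (diagram G S i) (Inl ` Z) s' ps'" using s \<open>mp ps = ps'\<close> by simp
qed

theorem corollary1:
  fixes G :: "'v graph" and X0 Y0 :: "'v set" and S :: "('v set \<times> 'v set) list"
  assumes "surrogate_query X0 Y0 G S"
  shows "(\<forall>i X Y Z. i < length S \<and> X \<subseteq> verts G \<and> Y \<subseteq> verts G
             \<and> Z \<subseteq> verts (diagram G S i)
             \<and> dsep (diagram G S i) (Inl ` X) (Inl ` Y) Z
           \<longrightarrow> dsep G X Y (Inl -` (Z - transport_nodes G S)))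
       \<and> (\<forall>X Y Z. X \<subseteq> verts G \<and> Y \<subseteq> verts G \<and> Z \<subseteq> verts G \<and> dsep G X Y Z
           \<longrightarrow> (\<forall>i < length S. dsep (diagram G S i) (Inl ` X) (Inl ` Y) (Inl ` Z)))"
proof (intro conjI allI impI)
  fix i X Y Z
  assume "i < length S \<and> X \<subseteq> verts G \<and> Y \<subseteq> verts G
             \<and> Z \<subseteq> verts (diagram G S i) \<and> dsep (diagram G S i) (Inl ` X) (Inl ` Y) Z"
  then show "dsep G X Y (Inl -` (Z - transport_nodes G S))" using part1[of G S i X Y Z] by simp
next
  fix X Y Z i
  assume "X \<subseteq> verts G \<and> Y \<subseteq> verts G \<and> Z \<subseteq> verts G \<and> dsep G X Y Z"
  then show "dsep (diagram G S i) (Inl ` X) (Inl ` Y) (Inl ` Z)" using part2[of G X Y Z S i] by simp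
qed

end
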